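(* Let $G$ be a loopless multigraph, let $k \geq 1$, and let $M$ be a maximal $k$-edge-colorable subgraph of $G$ (maximal with respect to inclusion of edge sets). For every $v \in V(G)$ with $d_M(v) < k$, \[ d^{F}(v) \leq d_M(v) - \sum_{w \in U_k(v)}\bigl(k - d_M(w) - \mu_G(v,w)\bigr). \]
   Context: For vertices $v,w$ of a multigraph $G$, $\mu_G(v,w)$ is the number of edges joining $v$ and $w$; for a subgraph $M$, $\mu_M(v,w)$ is the number of $M$-edges joining them and $d_M(v)$ is the number of $M$-edges incident to $v$. $N(v)=N_G(v)$ is the set of neighbors of $v$ in $G$. A proper $k$-edge-coloring assigns colors from $\{1,\dots,k\}$ so that distinct edges sharing an endpoint get distinct colors. For each $v\in V(G)$ define $F_k(v) = \{w \in N(v) : d_M(w) \leq k - \mu_G(v,w)\}$, $U_k(v) = \{w \in F_k(v) : \mu_M(v,w) < \mu_G(v,w)\}$, and $d^{F}(v) = \sum_{w\in F_k(v)} \mu_G(v,w)$. *)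

theory Defs
  imports Main
begin

text \<open>A multigraph is given by a vertex set V, an edge set E (edge identifiers)
and an endpoint map ends; it is loopless if every edge has exactly two
distinct endpoints in V. Subgraphs are given by their edge sets M \<subseteq> E.\<close>

definition loopless_multigraph :: "'v set \<Rightarrow> 'e set \<Rightarrow> ('e \<Rightarrow> 'v set) \<Rightarrow> bool" where
  "loopless_multigraph V E ends \<longleftrightarrow> finite V \<and> finite E \<and>
     (\<forall>e\<in>E. ends e \<subseteq> V \<and> card (ends e) = 2)"

definition mult :: "'e set \<Rightarrow> ('e \<Rightarrow> 'v set) \<Rightarrow> 'v \<Rightarrow> 'v \<Rightarrow> nat" where
  "mult A ends v w = card {e\<in>A. ends e = {v, w}}"

definition deg :: "'e set \<Rightarrow> ('e \<Rightarrow> 'v set) \<Rightarrow> 'v \<Rightarrow> nat" where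
  "deg A ends v = card {e\<in>A. v \<in> ends e}"

definition nbrs :: "'v set \<Rightarrow> 'e set \<Rightarrow> ('e \<Rightarrow> 'v set) \<Rightarrow> 'v \<Rightarrow> 'v set" where
  "nbrs V E ends v = {w\<in>V. w \<noteq> v \<and> mult E ends v w > 0}"

definition proper_edge_coloring :: "'e set \<Rightarrow> ('e \<Rightarrow> 'v set) \<Rightarrow> nat \<Rightarrow> ('e \<Rightarrow> nat) \<Rightarrow> bool" where
  "proper_edge_coloring A ends k c \<longleftrightarrow>
     (\<forall>e\<in>A. c e \<in> {1..k}) \<and>
     (\<forall>e\<in>A. \<forall>e'\<in>A. e \<noteq> e' \<and> ends e \<inter> ends e' \<noteq> {} \<longrightarrow> c e \<noteq> c e')"

definition k_edge_colorable :: "'e set \<Rightarrow> ('e \<Rightarrow> 'v set) \<Rightarrow> nat \<Rightarrow> bool" where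
  "k_edge_colorable A ends k \<longleftrightarrow> (\<exists>c. proper_edge_coloring A ends k c)"

definition maximal_k_colorable :: "'e set \<Rightarrow> ('e \<Rightarrow> 'v set) \<Rightarrow> nat \<Rightarrow> 'e set \<Rightarrow> bool" where
  "maximal_k_colorable E ends k M \<longleftrightarrow> M \<subseteq> E \<and> k_edge_colorable M ends k \<and>
     (\<forall>M'. M \<subset> M' \<and> M' \<subseteq> E \<longrightarrow> \<not> k_edge_colorable M' ends k)"

definition Fk :: "'v set \<Rightarrow> 'e set \<Rightarrow> ('e \<Rightarrow> 'v set) \<Rightarrow> 'e set \<Rightarrow> nat \<Rightarrow> 'v \<Rightarrow> 'v set" where
  "Fk V E ends M k v = {w\<in>nbrs V E ends v.
       int (deg M ends w) \<le> int k - int (mult E ends v w)}"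

definition Uk :: "'v set \<Rightarrow> 'e set \<Rightarrow> ('e \<Rightarrow> 'v set) \<Rightarrow> 'e set \<Rightarrow> nat \<Rightarrow> 'v \<Rightarrow> 'v set" where
  "Uk V E ends M k v = {w\<in>Fk V E ends M k v. mult M ends v w < mult E ends v w}"

definition dF :: "'v set \<Rightarrow> 'e set \<Rightarrow> ('e \<Rightarrow> 'v set) \<Rightarrow> 'e set \<Rightarrow> nat \<Rightarrow> 'v \<Rightarrow> nat" where
  "dF V E ends M k v = (\<Sum>w\<in>Fk V E ends M k v. mult E ends v w)"

end

theory Submission
  imports Defs
begin

locale mg =
  fixes V :: "'v set" and E :: "'e set" and ends :: "'e \<Rightarrow> 'v set" and k :: nat
  assumes LM: "loopless_multigraph V E ends"
begin

lemma finE: "finite E" and finV: "finite V" and endsE: "e \<in> E \<Longrightarrow> ends e \<subseteq> V"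
  and card2: "e \<in> E \<Longrightarrow> card (ends e) = 2"
  using LM unfolding loopless_multigraph_def by auto

lemma finE_ends: "e \<in> E \<Longrightarrow> finite (ends e)"
  using endsE finV finite_subset by blast

lemma ends2: "e \<in> E \<Longrightarrow> \<exists>a b. a \<noteq> b \<and> ends e = {a,b}"
  using card2 card_2_iff by metis

lemma ends_v: "e \<in> E \<Longrightarrow> v \<in> ends e \<Longrightarrow> \<exists>w. w \<noteq> v \<and> ends e = {v,w}"
  using ends2 by fastforce

definition miss :: "'e set \<Rightarrow> ('e \<Rightarrow> nat) \<Rightarrow> 'v \<Rightarrow> nat set" where
  "miss A \<phi> x = {c\<in>{1..k}. \<forall>e\<in>A. x \<in> ends e \<longrightarrow> \<phi> e \<noteq> c}"

abbreviation proper where "proper A \<phi> \<equiv> proper_edge_coloring A ends k \<phi>"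

definition ext :: "'e set \<Rightarrow> bool" where
  "ext A \<longleftrightarrow> (\<exists>e\<in>E-A. k_edge_colorable (insert e A) ends k)"

definition fan :: "'e set \<Rightarrow> ('e \<Rightarrow> nat) \<Rightarrow> 'v \<Rightarrow> ('e \<times> 'v) list \<Rightarrow> bool" where
  "fan A \<phi> v fs \<longleftrightarrow> distinct (map fst fs) \<and>
     (\<forall>i<length fs. fst (fs!i) \<in> E \<and> ends (fst (fs!i)) = {v, snd (fs!i)} \<and> snd (fs!i) \<noteq> v \<and>
        (fst (fs!i) \<notin> A \<or> (\<exists>l<i. \<phi> (fst (fs!i)) \<in> miss A \<phi> (snd (fs!l)))))"

lemma fan_nth:
  assumes "fan A \<phi> v fs" "i < length fs"
  shows "fst (fs!i) \<in> E" "ends (fst (fs!i)) = {v, snd (fs!i)}" "snd (fs!i) \<noteq> v"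
    "fst (fs!i) \<notin> A \<or> (\<exists>l<i. \<phi> (fst (fs!i)) \<in> miss A \<phi> (snd (fs!l)))"
  using assms unfolding fan_def by auto

lemma fan_inj:
  assumes "fan A \<phi> v fs" "i < length fs" "j < length fs" "fst (fs!i) = fst (fs!j)"
  shows "i = j"
proof -
  have "distinct (map fst fs)" using assms(1) unfolding fan_def by simp
  then show ?thesis using assms(2-4) by (metis length_map nth_eq_iff_index_eq nth_map)
qed

lemma fan_take: "fan A \<phi> v fs \<Longrightarrow> fan A \<phi> v (take n fs)"
  unfolding fan_def apply (auto simp: take_map[symmetric] distinct_take)
  subgoal for i by (metis (no_types, lifting) nth_take order.strict_trans)
  done

lemma fan_mono:
  assumes "fan A \<phi> v fs"
   "\<And>i. i < length fs \<Longrightarrow> fst (fs!i) \<in> A \<Longrightarrow> \<phi>' (fst (fs!i)) = \<phi> (fst (fs!i))"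
   "\<And>i l. i < length fs \<Longrightarrow> l < i \<Longrightarrow> fst (fs!i) \<in> A \<Longrightarrow> \<phi> (fst (fs!i)) \<in> miss A \<phi> (snd (fs!l))
      \<Longrightarrow> \<phi> (fst (fs!i)) \<in> miss A \<phi>' (snd (fs!l))"
  shows "fan A \<phi>' v fs"
  unfolding fan_def
proof (intro conjI allI impI)
  show "distinct (map fst fs)" using assms(1) unfolding fan_def by simp
  fix i assume i: "i < length fs"
  note f = fan_nth[OF assms(1) i]
  show "fst (fs!i) \<in> E" "ends (fst (fs!i)) = {v, snd (fs!i)}" "snd (fs!i) \<noteq> v" using f by auto
  show "fst (fs!i) \<notin> A \<or> (\<exists>l<i. \<phi>' (fst (fs!i)) \<in> miss A \<phi>' (snd (fs!l)))"
    using f(4) assms(2,3)[OF i] by metis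
qed

lemma fan_snoc:
  assumes "fan A \<phi> v fs" "e \<notin> fst ` set fs" "e \<in> E" "ends e = {v,w}" "w \<noteq> v"
    "e \<notin> A \<or> (\<exists>l<length fs. \<phi> e \<in> miss A \<phi> (snd (fs!l)))"
  shows "fan A \<phi> v (fs @ [(e,w)])"
proof -
  have d: "distinct (map fst (fs @ [(e, w)]))" using assms(1,2) unfolding fan_def by auto
  have "\<forall>i<length (fs @ [(e, w)]). fst ((fs @ [(e, w)]) ! i) \<in> E \<and> ends (fst ((fs @ [(e, w)]) ! i)) = {v, snd ((fs @ [(e, w)]) ! i)} \<and>
        snd ((fs @ [(e, w)]) ! i) \<noteq> v \<and>
        (fst ((fs @ [(e, w)]) ! i) \<notin> A \<or> (\<exists>l<i. \<phi> (fst ((fs @ [(e, w)]) ! i)) \<in> miss A \<phi> (snd ((fs @ [(e, w)]) ! l))))"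
  proof (intro allI impI)
    fix i assume i: "i < length (fs @ [(e, w)])"
    show "fst ((fs @ [(e, w)]) ! i) \<in> E \<and> ends (fst ((fs @ [(e, w)]) ! i)) = {v, snd ((fs @ [(e, w)]) ! i)} \<and>
        snd ((fs @ [(e, w)]) ! i) \<noteq> v \<and>
        (fst ((fs @ [(e, w)]) ! i) \<notin> A \<or> (\<exists>l<i. \<phi> (fst ((fs @ [(e, w)]) ! i)) \<in> miss A \<phi> (snd ((fs @ [(e, w)]) ! l))))"
    proof (cases "i < length fs")
      case True
      then show ?thesis using fan_nth[OF assms(1) True] by (auto simp: nth_append)
    next
      case False
      then have "i = length fs" using i by simp
      then show ?thesis using assms(3-6) by (auto simp: nth_append)
    qed
  qed
  then show ?thesis using d unfolding fan_def by blast
qed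

lemma proper_upd:
  assumes "proper A \<phi>" "ends e0 = {v,y}" "\<alpha> \<in> miss A \<phi> v" "\<alpha> \<in> miss A \<phi> y"
  shows "proper (insert e0 A) (\<phi>(e0:=\<alpha>))"
  using assms unfolding proper_edge_coloring_def miss_def by auto

lemma miss_upd: "c \<in> miss A \<phi> x \<Longrightarrow> c \<noteq> \<alpha> \<Longrightarrow> c \<in> miss A (\<phi>(e0:=\<alpha>)) x"
  by (auto simp: miss_def)

lemma shift:
  assumes "A \<subseteq> E" "proper A \<phi>" "fan A \<phi> v fs" "fs \<noteq> []" "\<alpha> \<in> miss A \<phi> v"
    "\<alpha> \<in> miss A \<phi> (snd (last fs))"
  shows "ext A"
  using assms
proof (induction "length fs" arbitrary: fs \<phi> \<alpha> rule: less_induct)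
  case less
  define p where "p = length fs - 1"
  have pl: "p < length fs" using less.prems(4) p_def by auto
  have last: "last fs = fs!p" using less.prems(4) p_def by (simp add: last_conv_nth)
  obtain ep yp where epd: "fs!p = (ep,yp)" by (cases "fs!p") auto
  note fp0 = fan_nth[OF less.prems(3) pl]
  have fp: "ep \<in> E" "ends ep = {v,yp}" "yp \<noteq> v" "ep \<notin> A \<or> (\<exists>l<p. \<phi> ep \<in> miss A \<phi> (snd (fs!l)))"
    using fp0 epd by auto
  have ay: "\<alpha> \<in> miss A \<phi> yp" using less.prems(6) last epd by simp
  have pr': "proper (insert ep A) (\<phi>(ep:=\<alpha>))" by (rule proper_upd[OF less.prems(2) fp(2) less.prems(5) ay])
  show ?case
  proof (cases "ep \<in> A")
    case False
    then show ?thesis unfolding ext_def k_edge_colorable_def using fp(1) pr' by blast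
  next
    case True
    note epA = True
    then obtain l where l: "l < p" "\<phi> ep \<in> miss A \<phi> (snd (fs!l))" using fp(4) by blast
    define \<gamma> where "\<gamma> = \<phi> ep"
    define \<phi>' where "\<phi>' = \<phi>(ep:=\<alpha>)"
    have pr: "proper A \<phi>'" using pr' epA \<phi>'_def by (simp add: insert_absorb)
    have ga: "\<gamma> \<noteq> \<alpha>" using less.prems(5) epA fp(2) unfolding miss_def \<gamma>_def by auto
    have gv: "\<gamma> \<in> miss A \<phi>' v"
    proof -
      have "\<gamma> \<in> {1..k}" using less.prems(2) epA unfolding proper_edge_coloring_def \<gamma>_def by auto
      moreover have "\<forall>e\<in>A. v \<in> ends e \<longrightarrow> \<phi>' e \<noteq> \<gamma>"
      proof (intro ballI impI)
        fix e assume e: "e \<in> A" "v \<in> ends e"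
        show "\<phi>' e \<noteq> \<gamma>"
        proof (cases "e = ep")
          case True thus ?thesis using ga \<phi>'_def by simp
        next
          case False
          then have "\<phi> e \<noteq> \<phi> ep" using less.prems(2) e epA fp(2) unfolding proper_edge_coloring_def by blast
          then show ?thesis using False \<phi>'_def \<gamma>_def by simp
        qed
      qed
      ultimately show ?thesis unfolding miss_def by simp
    qed
    have gy: "\<gamma> \<in> miss A \<phi>' (snd (fs!l))" using miss_upd[OF l(2)[folded \<gamma>_def] ga] \<phi>'_def by simp
    define fs' where "fs' = take (Suc l) fs"
    have lenfs': "length fs' = Suc l" using l pl fs'_def by simp
    have lenlt: "length fs' < length fs" using l pl lenfs' by simp
    have nth': "\<And>i. i < length fs' \<Longrightarrow> fs'!i = fs!i" using fs'_def by simp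
    have fan0: "fan A \<phi> v fs'" using fan_take[OF less.prems(3)] fs'_def by simp
    have fan': "fan A \<phi>' v fs'"
    proof (rule fan_mono[OF fan0])
      fix i assume i: "i < length fs'"
      have ne: "fst (fs!i) \<noteq> ep"
      proof
        assume "fst (fs!i) = ep"
        then have "fst (fs!i) = fst (fs!p)" using epd by simp
        then have "i = p" using fan_inj[OF less.prems(3)] i lenlt pl by auto
        then show False using i lenfs' l by simp
      qed
      show "fst (fs'!i) \<in> A \<Longrightarrow> \<phi>' (fst (fs'!i)) = \<phi> (fst (fs'!i))"
        using ne nth'[OF i] \<phi>'_def by simp
      fix l' assume l': "l' < i" "fst (fs'!i) \<in> A" "\<phi> (fst (fs'!i)) \<in> miss A \<phi> (snd (fs'!l'))"
      have ilt: "i < length fs" using i lenlt by simp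
      have "v \<in> ends (fst (fs!i))" using fan_nth(2)[OF less.prems(3) ilt] by simp
      then have "\<phi> (fst (fs!i)) \<noteq> \<alpha>" using less.prems(5) l'(2) nth'[OF i] unfolding miss_def by auto
      then show "\<phi> (fst (fs'!i)) \<in> miss A \<phi>' (snd (fs'!l'))"
        using miss_upd[OF l'(3)] nth'[OF i] \<phi>'_def by simp
    qed
    have ne': "fs' \<noteq> []" using lenfs' by auto
    have "last fs' = fs!l" using lenfs' nth'[of l] ne' by (simp add: last_conv_nth)
    then have gy': "\<gamma> \<in> miss A \<phi>' (snd (last fs'))" using gy by simp
    show ?thesis by (rule less.hyps[OF lenlt less.prems(1) pr fan' ne' gv gy'])
  qed
qed


end

context mg begin
definition Hs :: "'e set \<Rightarrow> ('e \<Rightarrow> nat) \<Rightarrow> nat \<Rightarrow> nat \<Rightarrow> 'e set" where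
  "Hs A \<phi> \<alpha> \<beta> = {e\<in>A. \<phi> e = \<alpha> \<or> \<phi> e = \<beta>}"
definition Rel :: "'e set \<Rightarrow> ('v \<times> 'v) set" where
  "Rel H = {(a,b). \<exists>e\<in>H. ends e = {a,b}}"
definition comp :: "'e set \<Rightarrow> 'v \<Rightarrow> 'v set" where
  "comp H x = {z. (x,z) \<in> (Rel H)\<^sup>*}"
definition swap :: "'e set \<Rightarrow> 'v set \<Rightarrow> nat \<Rightarrow> nat \<Rightarrow> ('e \<Rightarrow> nat) \<Rightarrow> 'e \<Rightarrow> nat" where
  "swap H C \<alpha> \<beta> \<phi> = (\<lambda>e. if e \<in> H \<and> ends e \<subseteq> C then (if \<phi> e = \<alpha> then \<beta> else \<alpha>) else \<phi> e)"

lemma sym_Rel: "sym (Rel H)"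
  unfolding Rel_def sym_def by (auto simp: insert_commute)

lemma comp_self: "x \<in> comp H x" unfolding comp_def by simp

lemma comp_sym: "z \<in> comp H x \<Longrightarrow> x \<in> comp H z"
  using sym_rtrancl[OF sym_Rel[of H]] unfolding comp_def sym_def by blast

lemma comp_trans: "z \<in> comp H y \<Longrightarrow> y \<in> comp H x \<Longrightarrow> z \<in> comp H x"
  unfolding comp_def by (meson mem_Collect_eq rtrancl_trans)

lemma comp_closed:
  assumes "H \<subseteq> E" "e \<in> H" "x \<in> ends e" "x \<in> comp H y"
  shows "ends e \<subseteq> comp H y"
proof -
  obtain a b where ab: "a \<noteq> b" "ends e = {a,b}" using ends2 assms(1,2) by blast
  have r: "(a,b) \<in> Rel H" "(b,a) \<in> Rel H" using ab assms(2) unfolding Rel_def by (auto simp: insert_commute)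
  show ?thesis
  proof
    fix z assume z: "z \<in> ends e"
    have "(x,z) \<in> Rel H \<or> z = x" using ab r assms(3) z by auto
    then show "z \<in> comp H y" using assms(4) unfolding comp_def
      by (metis mem_Collect_eq rtrancl_into_rtrancl)
  qed
qed

lemma comp_sub: "H \<subseteq> E \<Longrightarrow> comp H x \<subseteq> insert x V"
proof
  fix z assume H: "H \<subseteq> E" and "z \<in> comp H x"
  then have "(x,z) \<in> (Rel H)\<^sup>*" unfolding comp_def by simp
  then show "z \<in> insert x V"
  proof (induction rule: rtrancl_induct)
    case base then show ?case by simp
  next
    case (step y z)
    then obtain e where "e \<in> H" "ends e = {y,z}" unfolding Rel_def by auto
    then show ?case using H endsE by blast
  qed
qed

lemma comp_fin: "H \<subseteq> E \<Longrightarrow> finite (comp H x)"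
  using comp_sub finV by (meson finite_insert finite_subset)

lemma grow:
  assumes "x \<in> S" "u \<in> comp H x" "u \<notin> S"
  shows "\<exists>u' w e. u' \<in> comp H x \<and> u' \<notin> S \<and> w \<in> S \<and> e \<in> H \<and> ends e = {w,u'}"
proof -
  have "(x,u) \<in> (Rel H)\<^sup>*" using assms(2) unfolding comp_def by simp
  then have "u \<in> S \<or> (\<exists>u' w e. u' \<in> comp H x \<and> u' \<notin> S \<and> w \<in> S \<and> e \<in> H \<and> ends e = {w,u'})"
  proof (induction rule: rtrancl_induct)
    case base then show ?case using assms(1) by simp
  next
    case (step y z)
    then obtain e where e: "e \<in> H" "ends e = {y,z}" unfolding Rel_def by auto
    have zc: "z \<in> comp H x" using step(1,2) unfolding comp_def by auto
    show ?case
    proof (cases "y \<in> S")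
      case True then show ?thesis using e zc by blast
    next
      case False then show ?thesis using step(3) by blast
    qed
  qed
  then show ?thesis using assms(3) by blast
qed

lemma conn:
  assumes HE: "H \<subseteq> E"
  shows "card (comp H x) \<le> card {e\<in>H. ends e \<subseteq> comp H x} + 1"
proof -
  define C where "C = comp H x"
  have fC: "finite C" using comp_fin[OF HE] C_def by simp
  have fe: "\<And>S. finite {e\<in>H. ends e \<subseteq> S}" using HE finE by (metis (no_types, lifting) finite_subset mem_Collect_eq subsetI)
  have main: "\<forall>S. x \<in> S \<longrightarrow> S \<subseteq> C \<longrightarrow> card (C - S) = n \<longrightarrow> card S \<le> card {e\<in>H. ends e \<subseteq> S} + 1
      \<longrightarrow> card C \<le> card {e\<in>H. ends e \<subseteq> C} + 1" for n
  proof (induction n)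
    case 0
    show ?case
    proof (intro allI impI)
      fix S assume S: "x \<in> S" "S \<subseteq> C" "card (C - S) = 0" "card S \<le> card {e\<in>H. ends e \<subseteq> S} + 1"
      then have "S = C" using fC by (metis Diff_eq_empty_iff card_0_eq finite_Diff subset_antisym)
      then show "card C \<le> card {e\<in>H. ends e \<subseteq> C} + 1" using S by simp
    qed
  next
    case (Suc n)
    show ?case
    proof (intro allI impI)
      fix S assume S: "x \<in> S" "S \<subseteq> C" "card (C - S) = Suc n" "card S \<le> card {e\<in>H. ends e \<subseteq> S} + 1"
      then obtain u where u: "u \<in> C" "u \<notin> S" by (metis Diff_eq_empty_iff card_0_eq nat.distinct(1) subsetI empty_iff finite.emptyI)
      obtain u' w e where g: "u' \<in> C" "u' \<notin> S" "w \<in> S" "e \<in> H" "ends e = {w,u'}"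
        using grow[OF S(1) u(1)[unfolded C_def] u(2)] C_def by blast
      define S' where "S' = insert u' S"
      have fS: "finite S" using S(2) fC finite_subset by blast
      have c1: "card (C - S') = n" using S(3) g(1,2) S'_def fC
        by (metis Diff_insert card_Diff_singleton diff_Suc_1 finite_Diff DiffI)
      have c2: "card S' = Suc (card S)" using fS g(2) S'_def by simp
      have sub: "insert e {e\<in>H. ends e \<subseteq> S} \<subseteq> {e\<in>H. ends e \<subseteq> S'}" using g S'_def by auto
      have nin: "e \<notin> {e\<in>H. ends e \<subseteq> S}" using g by auto
      have "card (insert e {e\<in>H. ends e \<subseteq> S}) = Suc (card {e\<in>H. ends e \<subseteq> S})"
        using nin fe by simp
      then have "card {e\<in>H. ends e \<subseteq> S} + 1 \<le> card {e\<in>H. ends e \<subseteq> S'}"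
        using card_mono[OF fe sub] by simp
      then have c3: "card S' \<le> card {e\<in>H. ends e \<subseteq> S'} + 1" using c2 S(4) by simp
      have "x \<in> S'" "S' \<subseteq> C" using S g S'_def by auto
      then show "card C \<le> card {e\<in>H. ends e \<subseteq> C} + 1" using Suc.IH c1 c3 by blast
    qed
  qed
  have "x \<in> C" using comp_self C_def by simp
  then have "card C \<le> card {e\<in>H. ends e \<subseteq> C} + 1"
    using main[of "card (C - {x})", rule_format, of "{x}"] by simp
  then show ?thesis using C_def by simp
qed

end

context mg begin
lemma proper_ne:
  assumes "proper A \<phi>" "e \<in> A" "e' \<in> A" "e \<noteq> e'" "x \<in> ends e" "x \<in> ends e'"
  shows "\<phi> e \<noteq> \<phi> e'"
proof -
  have "ends e \<inter> ends e' \<noteq> {}" using assms(5,6) by blast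
  then show ?thesis using assms(1-4) unfolding proper_edge_coloring_def by blast
qed

lemma proper_col: "proper A \<phi> \<Longrightarrow> e \<in> A \<Longrightarrow> \<phi> e \<in> {1..k}"
  unfolding proper_edge_coloring_def by blast

lemma match_card:
  assumes "proper A \<phi>" "A \<subseteq> E" "S \<subseteq> A" "\<forall>e\<in>S. \<phi> e = \<gamma>" "(\<Union>e\<in>S. ends e) \<subseteq> T" "finite T"
  shows "2 * card S \<le> card T"
proof -
  have "S \<subseteq> E" using assms(2,3) by blast
  then have fS: "finite S" by (rule finite_subset[OF _ finE])
  have dis: "\<forall>e\<in>S. \<forall>e'\<in>S. e \<noteq> e' \<longrightarrow> ends e \<inter> ends e' = {}"
  proof (intro ballI impI)
    fix e e' assume ee: "e \<in> S" "e' \<in> S" "e \<noteq> e'"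
    show "ends e \<inter> ends e' = {}"
    proof (rule ccontr)
      assume "ends e \<inter> ends e' \<noteq> {}"
      then obtain x where "x \<in> ends e" "x \<in> ends e'" by blast
      then have "\<phi> e \<noteq> \<phi> e'" using proper_ne[OF assms(1)] assms(3) ee by blast
      then show False using assms(4) ee by simp
    qed
  qed
  have fe: "\<forall>e\<in>S. finite (ends e)" using assms(2,3) finE_ends by blast
  have "card (\<Union>e\<in>S. ends e) = (\<Sum>e\<in>S. card (ends e))"
    by (rule card_UN_disjoint[OF fS fe dis])
  also have "\<dots> = (\<Sum>e\<in>S. 2)"
  proof (rule sum.cong)
    fix e assume "e \<in> S" then show "card (ends e) = 2" using card2 assms(2,3) by blast
  qed simp
  also have "\<dots> = 2 * card S" by simp
  finally have "card (\<Union>e\<in>S. ends e) = 2 * card S" .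
  then show ?thesis using card_mono[OF assms(6,5)] by simp
qed

lemma three:
  assumes AE: "A \<subseteq> E" and pr: "proper A \<phi>" and ab: "\<alpha> \<noteq> \<beta>" and d: "a \<noteq> b" "a \<noteq> c" "b \<noteq> c"
    and m: "\<beta> \<in> miss A \<phi> a" "\<alpha> \<in> miss A \<phi> b" "\<alpha> \<in> miss A \<phi> c"
    and bc: "b \<in> comp (Hs A \<phi> \<alpha> \<beta>) a" "c \<in> comp (Hs A \<phi> \<alpha> \<beta>) a"
  shows False
proof -
  define H where "H = Hs A \<phi> \<alpha> \<beta>"
  have HA: "H \<subseteq> A" unfolding H_def Hs_def by auto
  have HE: "H \<subseteq> E" using HA AE by auto
  define C where "C = comp H a"
  have fC: "finite C" using comp_fin[OF HE] C_def by simp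
  have inC: "a \<in> C" "b \<in> C" "c \<in> C" using bc comp_self C_def H_def by auto
  define EC where "EC = {e\<in>H. ends e \<subseteq> C}"
  define Ea where "Ea = {e\<in>EC. \<phi> e = \<alpha>}"
  define Eb where "Eb = {e\<in>EC. \<phi> e = \<beta>}"
  have "EC \<subseteq> E" using HE EC_def by blast
  then have fEC: "finite EC" by (rule finite_subset[OF _ finE])
  have ECu: "EC = Ea \<union> Eb" unfolding Ea_def Eb_def EC_def H_def Hs_def by auto
  have "card (Ea \<union> Eb) = card Ea + card Eb"
    by (rule card_Un_disjoint) (use fEC ab in \<open>auto simp: Ea_def Eb_def\<close>)
  then have "card EC = card Ea + card Eb" using ECu by simp
  moreover have "card C \<le> card EC + 1" using conn[OF HE, of a] C_def EC_def by simp
  moreover have "2 * card Ea \<le> card (C - {b,c})"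
  proof (rule match_card[OF pr AE])
    show "Ea \<subseteq> A" "\<forall>e\<in>Ea. \<phi> e = \<alpha>" unfolding Ea_def EC_def using HA by auto
    show "finite (C - {b,c})" using fC by simp
    show "(\<Union>e\<in>Ea. ends e) \<subseteq> C - {b,c}" using m(2,3) HA unfolding Ea_def EC_def miss_def by auto
  qed
  moreover have "2 * card Eb \<le> card (C - {a})"
  proof (rule match_card[OF pr AE])
    show "Eb \<subseteq> A" "\<forall>e\<in>Eb. \<phi> e = \<beta>" unfolding Eb_def EC_def using HA by auto
    show "finite (C - {a})" using fC by simp
    show "(\<Union>e\<in>Eb. ends e) \<subseteq> C - {a}" using m(1) HA unfolding Eb_def EC_def miss_def by auto
  qed
  moreover have "card (C - {b,c}) = card C - 2"
  proof -
    have "{b,c} \<subseteq> C" using inC by auto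
    moreover have "card {b,c} = 2" using d by simp
    ultimately show ?thesis using fC card_Diff_subset[of "{b,c}" C] by simp
  qed
  moreover have "card (C - {a}) = card C - 1" using inC fC by simp
  moreover have "card C \<ge> 2"
  proof -
    have "{b,c} \<subseteq> C" using inC by auto
    then have "card {b,c} \<le> card C" using card_mono[OF fC] by blast
    then show ?thesis using d by simp
  qed
  ultimately have x1: "2 * card Ea + 2 \<le> card C" and x2: "2 * card Eb + 1 \<le> card C"
    and x3: "card C \<le> card Ea + card Eb + 1" by linarith+
  from x1 x2 x3 show False by linarith
qed

end

context mg begin
lemma swap_edge: "\<not> ends e \<subseteq> C \<Longrightarrow> swap H C \<alpha> \<beta> \<phi> e = \<phi> e"
  unfolding swap_def by simp

lemma swap_out: "x \<notin> C \<Longrightarrow> miss A (swap H C \<alpha> \<beta> \<phi>) x = miss A \<phi> x"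
  unfolding miss_def swap_def by auto

lemma swap_other: "c \<noteq> \<alpha> \<Longrightarrow> c \<noteq> \<beta> \<Longrightarrow> c \<in> miss A \<phi> x \<Longrightarrow> c \<in> miss A (swap H C \<alpha> \<beta> \<phi>) x"
  unfolding miss_def swap_def by auto

lemma swap_in:
  assumes "\<forall>e\<in>Hs A \<phi> \<alpha> \<beta>. \<forall>y\<in>ends e. y \<in> C \<longrightarrow> ends e \<subseteq> C"
    "x \<in> C" "\<alpha> \<in> miss A \<phi> x" "\<beta> \<in> {1..k}" "\<alpha> \<noteq> \<beta>"
  shows "\<beta> \<in> miss A (swap (Hs A \<phi> \<alpha> \<beta>) C \<alpha> \<beta> \<phi>) x"
  using assms unfolding miss_def swap_def Hs_def by auto

lemma swap_proper:
  assumes pr: "proper A \<phi>" and cl: "\<forall>e\<in>Hs A \<phi> \<alpha> \<beta>. \<forall>y\<in>ends e. y \<in> C \<longrightarrow> ends e \<subseteq> C"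
    and "\<alpha> \<in> {1..k}" "\<beta> \<in> {1..k}" "\<alpha> \<noteq> \<beta>"
  shows "proper A (swap (Hs A \<phi> \<alpha> \<beta>) C \<alpha> \<beta> \<phi>)"
  unfolding proper_edge_coloring_def
proof (intro conjI ballI impI)
  fix e assume "e \<in> A"
  then show "swap (Hs A \<phi> \<alpha> \<beta>) C \<alpha> \<beta> \<phi> e \<in> {1..k}"
    using pr assms(3,4) unfolding proper_edge_coloring_def swap_def by auto
next
  fix e e' assume e: "e \<in> A" "e' \<in> A" and ee: "e \<noteq> e' \<and> ends e \<inter> ends e' \<noteq> {}"
  then obtain y where y: "y \<in> ends e" "y \<in> ends e'" by blast
  have ne: "\<phi> e \<noteq> \<phi> e'" using pr e ee unfolding proper_edge_coloring_def by blast
  define H where "H = Hs A \<phi> \<alpha> \<beta>"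
  have clH: "\<And>f z. f \<in> H \<Longrightarrow> z \<in> ends f \<Longrightarrow> z \<in> C \<Longrightarrow> ends f \<subseteq> C" using cl H_def by blast
  have inH: "\<And>f. f \<in> A \<Longrightarrow> f \<in> H \<longleftrightarrow> \<phi> f = \<alpha> \<or> \<phi> f = \<beta>" unfolding H_def Hs_def by auto
  show "swap (Hs A \<phi> \<alpha> \<beta>) C \<alpha> \<beta> \<phi> e \<noteq> swap (Hs A \<phi> \<alpha> \<beta>) C \<alpha> \<beta> \<phi> e'"
  proof (cases "e \<in> H \<and> ends e \<subseteq> C")
    case T1: True
    show ?thesis
    proof (cases "e' \<in> H \<and> ends e' \<subseteq> C")
      case True
      have s1: "swap (Hs A \<phi> \<alpha> \<beta>) C \<alpha> \<beta> \<phi> e = (if \<phi> e = \<alpha> then \<beta> else \<alpha>)"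
        using T1 unfolding H_def swap_def by simp
      have s2: "swap (Hs A \<phi> \<alpha> \<beta>) C \<alpha> \<beta> \<phi> e' = (if \<phi> e' = \<alpha> then \<beta> else \<alpha>)"
        using True unfolding H_def swap_def by simp
      have "\<phi> e = \<alpha> \<or> \<phi> e = \<beta>" "\<phi> e' = \<alpha> \<or> \<phi> e' = \<beta>" using T1 True inH e by auto
      then show ?thesis using s1 s2 ne assms(5) unfolding H_def by auto
    next
      case False
      have "y \<in> C" using T1 y by auto
      then have "e' \<notin> H" using False clH[of e' y] y(2) by blast
      then have "\<phi> e' \<noteq> \<alpha>" "\<phi> e' \<noteq> \<beta>" using inH e by auto
      moreover have "swap (Hs A \<phi> \<alpha> \<beta>) C \<alpha> \<beta> \<phi> e = (if \<phi> e = \<alpha> then \<beta> else \<alpha>)"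
        using T1 unfolding H_def swap_def by simp
      moreover have "swap (Hs A \<phi> \<alpha> \<beta>) C \<alpha> \<beta> \<phi> e' = \<phi> e'"
        using False unfolding swap_def H_def[symmetric] by (simp only: if_False)
      ultimately show ?thesis by simp
    qed
  next
    case F1: False
    show ?thesis
    proof (cases "e' \<in> H \<and> ends e' \<subseteq> C")
      case True
      have "y \<in> C" using True y by auto
      then have "e \<notin> H" using F1 clH[of e y] y(1) by blast
      then have "\<phi> e \<noteq> \<alpha>" "\<phi> e \<noteq> \<beta>" using inH e by auto
      moreover have "swap (Hs A \<phi> \<alpha> \<beta>) C \<alpha> \<beta> \<phi> e' = (if \<phi> e' = \<alpha> then \<beta> else \<alpha>)"
        using True unfolding H_def swap_def by simp
      moreover have "swap (Hs A \<phi> \<alpha> \<beta>) C \<alpha> \<beta> \<phi> e = \<phi> e"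
        using F1 unfolding swap_def H_def[symmetric] by (simp only: if_False)
      ultimately show ?thesis by simp
    next
      case False
      have "swap (Hs A \<phi> \<alpha> \<beta>) C \<alpha> \<beta> \<phi> e = \<phi> e"
        using F1 unfolding swap_def H_def[symmetric] by (simp only: if_False)
      moreover have "swap (Hs A \<phi> \<alpha> \<beta>) C \<alpha> \<beta> \<phi> e' = \<phi> e'"
        using False unfolding swap_def H_def[symmetric] by (simp only: if_False)
      ultimately show ?thesis using ne by simp
    qed
  qed
qed

end

context mg begin

lemma kempe:
  assumes AE: "A \<subseteq> E" and pr: "proper A \<phi>" and bv: "\<beta> \<in> miss A \<phi> v" and fan: "fan A \<phi> v fs"
   and p: "p < length fs" and j: "j < p"
   and el1: "\<forall>i<p. miss A \<phi> v \<inter> miss A \<phi> (snd (fs!i)) = {}"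
   and el2: "\<forall>i<p. \<forall>i'<p. snd (fs!i) \<noteq> snd (fs!i') \<longrightarrow> miss A \<phi> (snd (fs!i)) \<inter> miss A \<phi> (snd (fs!i')) = {}"
   and yne: "snd (fs!j) \<noteq> snd (fs!p)"
   and aj: "\<alpha> \<in> miss A \<phi> (snd (fs!j))" and ap: "\<alpha> \<in> miss A \<phi> (snd (fs!p))"
   and minj: "\<forall>i<j. \<alpha> \<notin> miss A \<phi> (snd (fs!i))"
  shows "ext A"
proof -
  define yj where "yj = snd (fs!j)"
  define yp where "yp = snd (fs!p)"
  have jl: "j < length fs" using j p by simp
  have ab: "\<alpha> \<noteq> \<beta>" using el1 j aj bv by blast
  have a1: "\<alpha> \<in> {1..k}" "\<beta> \<in> {1..k}" using aj bv unfolding miss_def by auto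
  have vyj: "v \<noteq> yj" "v \<noteq> yp" using fan_nth(3)[OF fan jl] fan_nth(3)[OF fan p] yj_def yp_def by auto
  have yne': "yj \<noteq> yp" using yne yj_def yp_def by simp
  define H where "H = Hs A \<phi> \<alpha> \<beta>"
  have HE: "H \<subseteq> E" using AE unfolding H_def Hs_def by auto
  have cl: "\<And>x. \<forall>e\<in>Hs A \<phi> \<alpha> \<beta>. \<forall>y\<in>ends e. y \<in> comp H x \<longrightarrow> ends e \<subseteq> comp H x"
    using comp_closed[OF HE] H_def by blast
  have atv: "\<And>i. i < length fs \<Longrightarrow> v \<in> ends (fst (fs!i))" using fan_nth(2)[OF fan] by auto
  have notb: "\<And>i. i < length fs \<Longrightarrow> fst (fs!i) \<in> A \<Longrightarrow> \<phi> (fst (fs!i)) \<noteq> \<beta>"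
    using bv atv unfolding miss_def by fastforce
  have shiftT: "ext A" if "proper A \<phi>'" "q < length fs" "fan A \<phi>' v (take (Suc q) fs)"
      "\<beta> \<in> miss A \<phi>' v" "\<beta> \<in> miss A \<phi>' (snd (fs!q))" for \<phi>' q
  proof -
    have ne: "take (Suc q) fs \<noteq> []" using that(2) by (cases fs) auto
    have "last (take (Suc q) fs) = fs!q" using that(2) ne by (simp add: last_conv_nth)
    then show ?thesis using shift[OF AE that(1) that(3) ne that(4)] that(5) by simp
  qed
  show ?thesis
  proof (cases "v \<in> comp H yj")
    case False
    define C where "C = comp H yj"
    define \<phi>' where "\<phi>' = swap H C \<alpha> \<beta> \<phi>"
    have pr': "proper A \<phi>'" using swap_proper[OF pr cl[of yj] a1 ab] unfolding \<phi>'_def C_def H_def .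
    have fan0: "fan A \<phi> v (take (Suc j) fs)" by (rule fan_take[OF fan])
    have fan': "fan A \<phi>' v (take (Suc j) fs)"
    proof (rule fan_mono[OF fan0])
      fix i assume i: "i < length (take (Suc j) fs)"
      then have i': "i < length fs" "i \<le> j" by auto
      have nth: "take (Suc j) fs ! i = fs ! i" using i by simp
      have "\<not> ends (fst (fs!i)) \<subseteq> C" using atv[OF i'(1)] False C_def by blast
      then show "fst (take (Suc j) fs ! i) \<in> A \<Longrightarrow> \<phi>' (fst (take (Suc j) fs ! i)) = \<phi> (fst (take (Suc j) fs ! i))"
        using nth swap_edge \<phi>'_def by simp
      fix l assume l: "l < i" "fst (take (Suc j) fs ! i) \<in> A"
        "\<phi> (fst (take (Suc j) fs ! i)) \<in> miss A \<phi> (snd (take (Suc j) fs ! l))"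
      have nthl: "take (Suc j) fs ! l = fs ! l" using l(1) i by simp
      have c1: "\<phi> (fst (fs!i)) \<noteq> \<beta>" using notb[OF i'(1)] l(2) nth by simp
      have c2: "\<phi> (fst (fs!i)) \<noteq> \<alpha>"
      proof
        assume "\<phi> (fst (fs!i)) = \<alpha>"
        then have "\<alpha> \<in> miss A \<phi> (snd (fs!l))" using l(3) nth nthl by simp
        with minj l(1) i'(2) show False by auto
      qed
      show "\<phi> (fst (take (Suc j) fs ! i)) \<in> miss A \<phi>' (snd (take (Suc j) fs ! l))"
        using swap_other[OF c2 c1, of A \<phi> "snd (fs!l)" H C] l(3) nth nthl \<phi>'_def by simp
    qed
    have bv': "\<beta> \<in> miss A \<phi>' v" using swap_out[of v C] False bv C_def \<phi>'_def by simp
    have yjC: "yj \<in> C" using comp_self C_def by simp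
    have bj': "\<beta> \<in> miss A \<phi>' yj"
      using swap_in[OF cl[of yj] yjC[unfolded C_def] _ a1(2) ab] aj yj_def C_def H_def \<phi>'_def by simp
    show ?thesis using shiftT[OF pr' jl fan' bv'] bj' yj_def by simp
  next
    case True
    define C where "C = comp H yp"
    have jv: "yj \<in> comp H v" using comp_sym True by blast
    have vC: "v \<notin> C"
    proof
      assume "v \<in> C"
      then have "yp \<in> comp H v" using comp_sym C_def by blast
      then show False using three[OF AE pr ab vyj(1) vyj(2) yne' bv] aj ap jv yj_def yp_def H_def by blast
    qed
    have yjC: "yj \<notin> C"
    proof
      assume "yj \<in> C"
      then have "yp \<in> comp H yj" using comp_sym C_def by blast
      then have "yp \<in> comp H v" using comp_trans jv by blast
      then show False using three[OF AE pr ab vyj(1) vyj(2) yne' bv] aj ap jv yj_def yp_def H_def by blast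
    qed
    define \<phi>' where "\<phi>' = swap H C \<alpha> \<beta> \<phi>"
    have pr': "proper A \<phi>'" using swap_proper[OF pr cl[of yp] a1 ab] unfolding \<phi>'_def C_def H_def .
    have fan0: "fan A \<phi> v (take (Suc p) fs)" by (rule fan_take[OF fan])
    have fan': "fan A \<phi>' v (take (Suc p) fs)"
    proof (rule fan_mono[OF fan0])
      fix i assume i: "i < length (take (Suc p) fs)"
      then have i': "i < length fs" "i \<le> p" by auto
      have nth: "take (Suc p) fs ! i = fs ! i" using i by simp
      have "\<not> ends (fst (fs!i)) \<subseteq> C" using atv[OF i'(1)] vC by blast
      then show "fst (take (Suc p) fs ! i) \<in> A \<Longrightarrow> \<phi>' (fst (take (Suc p) fs ! i)) = \<phi> (fst (take (Suc p) fs ! i))"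
        using nth swap_edge \<phi>'_def by simp
      fix l assume l: "l < i" "fst (take (Suc p) fs ! i) \<in> A"
        "\<phi> (fst (take (Suc p) fs ! i)) \<in> miss A \<phi> (snd (take (Suc p) fs ! l))"
      have nthl: "take (Suc p) fs ! l = fs ! l" using l(1) i by simp
      have lp: "l < p" using l(1) i'(2) by simp
      have c1: "\<phi> (fst (fs!i)) \<noteq> \<beta>" using notb[OF i'(1)] l(2) nth by simp
      show "\<phi> (fst (take (Suc p) fs ! i)) \<in> miss A \<phi>' (snd (take (Suc p) fs ! l))"
      proof (cases "\<phi> (fst (fs!i)) = \<alpha>")
        case True
        then have am: "\<alpha> \<in> miss A \<phi> (snd (fs!l))" using l(3) nth nthl by simp
        have "snd (fs!l) = yj"
        proof (rule ccontr)
          assume "snd (fs!l) \<noteq> yj"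
          then have "miss A \<phi> (snd (fs!l)) \<inter> miss A \<phi> yj = {}" using el2 lp j yj_def by blast
          then show False using am aj yj_def by blast
        qed
        then have "miss A \<phi>' (snd (fs!l)) = miss A \<phi> (snd (fs!l))"
          using swap_out[of yj C] yjC \<phi>'_def by simp
        then show ?thesis using l(3) nth nthl by simp
      next
        case False
        show ?thesis
          using swap_other[OF False c1, of A \<phi> "snd (fs!l)" H C] l(3) nth nthl \<phi>'_def by simp
      qed
    qed
    have bv': "\<beta> \<in> miss A \<phi>' v" using swap_out[of v C] vC bv \<phi>'_def by simp
    have ypC: "yp \<in> C" using comp_self C_def by simp
    have bp': "\<beta> \<in> miss A \<phi>' yp"
      using swap_in[OF cl[of yp] ypC[unfolded C_def] _ a1(2) ab] ap yp_def C_def H_def \<phi>'_def by simp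
    show ?thesis using shiftT[OF pr' p fan' bv'] bp' yp_def by simp
  qed
qed

end

context mg begin

lemma elem:
  assumes AE: "A \<subseteq> E" and pr: "proper A \<phi>" and bv: "\<beta> \<in> miss A \<phi> v" and nx: "\<not> ext A"
  shows "fan A \<phi> v fs \<Longrightarrow> (\<forall>i<length fs. miss A \<phi> v \<inter> miss A \<phi> (snd (fs!i)) = {}) \<and>
    (\<forall>i<length fs. \<forall>i'<length fs. snd (fs!i) \<noteq> snd (fs!i') \<longrightarrow> miss A \<phi> (snd (fs!i)) \<inter> miss A \<phi> (snd (fs!i')) = {})"
proof (induction fs rule: rev_induct)
  case Nil then show ?case by simp
next
  case (snoc x gs)
  define fs where "fs = gs @ [x]"
  define p where "p = length gs"
  have fan: "fan A \<phi> v fs" using snoc.prems fs_def by simp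
  have fg: "fan A \<phi> v gs" using fan_take[OF fan, of p] fs_def p_def by simp
  have nth: "\<And>i. i < p \<Longrightarrow> fs!i = gs!i" using fs_def p_def by (simp add: nth_append)
  have nthp: "fs!p = x" using fs_def p_def by simp
  have lenfs: "length fs = Suc p" using fs_def p_def by simp
  note IH = snoc.IH[OF fg]
  have el1: "\<forall>i<p. miss A \<phi> v \<inter> miss A \<phi> (snd (fs!i)) = {}" using IH nth p_def by auto
  have el2: "\<forall>i<p. \<forall>i'<p. snd (fs!i) \<noteq> snd (fs!i') \<longrightarrow> miss A \<phi> (snd (fs!i)) \<inter> miss A \<phi> (snd (fs!i')) = {}"
    using IH nth p_def by auto
  have P1: "miss A \<phi> v \<inter> miss A \<phi> (snd x) = {}"
  proof (rule ccontr)
    assume "miss A \<phi> v \<inter> miss A \<phi> (snd x) \<noteq> {}"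
    then obtain \<alpha> where a: "\<alpha> \<in> miss A \<phi> v" "\<alpha> \<in> miss A \<phi> (snd x)" by blast
    have "fs \<noteq> []" "last fs = x" using fs_def by auto
    then show False using shift[OF AE pr fan _ a(1)] a(2) nx by auto
  qed
  have P2: "miss A \<phi> (snd (fs!j)) \<inter> miss A \<phi> (snd x) = {}" if j: "j < p" "snd (fs!j) \<noteq> snd x" for j
  proof (rule ccontr)
    assume "miss A \<phi> (snd (fs!j)) \<inter> miss A \<phi> (snd x) \<noteq> {}"
    then obtain \<alpha> where a: "\<alpha> \<in> miss A \<phi> (snd (fs!j))" "\<alpha> \<in> miss A \<phi> (snd x)" by blast
    obtain j0 where j0: "j0 \<le> j" "\<forall>i<j0. \<alpha> \<notin> miss A \<phi> (snd (fs!i))" "\<alpha> \<in> miss A \<phi> (snd (fs!j0))"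
      using ex_least_nat_le[of "\<lambda>i. \<alpha> \<in> miss A \<phi> (snd (fs!i))" j] a(1) by blast
    have j0p: "j0 < p" using j0(1) j(1) by simp
    have "snd (fs!j0) = snd (fs!j)"
    proof (rule ccontr)
      assume "snd (fs!j0) \<noteq> snd (fs!j)"
      then have "miss A \<phi> (snd (fs!j0)) \<inter> miss A \<phi> (snd (fs!j)) = {}" using el2 j0p j(1) by blast
      then show False using a(1) j0(3) by blast
    qed
    then have yne: "snd (fs!j0) \<noteq> snd (fs!p)" using j(2) nthp by simp
    have ap: "\<alpha> \<in> miss A \<phi> (snd (fs!p))" using a(2) nthp by simp
    have pl: "p < length fs" using lenfs by simp
    show False using kempe[OF AE pr bv fan pl j0p el1 el2 yne j0(3) ap j0(2)] nx by simp
  qed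
  have G1: "\<forall>i<length fs. miss A \<phi> v \<inter> miss A \<phi> (snd (fs!i)) = {}"
  proof (intro allI impI)
    fix i assume i: "i < length fs"
    show "miss A \<phi> v \<inter> miss A \<phi> (snd (fs!i)) = {}"
    proof (cases "i < p")
      case True then show ?thesis using el1 by blast
    next
      case False then have "i = p" using i lenfs by simp
      then show ?thesis using P1 nthp by simp
    qed
  qed
  have G2: "\<forall>i<length fs. \<forall>i'<length fs. snd (fs!i) \<noteq> snd (fs!i') \<longrightarrow> miss A \<phi> (snd (fs!i)) \<inter> miss A \<phi> (snd (fs!i')) = {}"
  proof (intro allI impI)
    fix i i' assume i: "i < length fs" "i' < length fs" "snd (fs!i) \<noteq> snd (fs!i')"
    show "miss A \<phi> (snd (fs!i)) \<inter> miss A \<phi> (snd (fs!i')) = {}"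
    proof (cases "i < p")
      case True
      show ?thesis
      proof (cases "i' < p")
        case True then show ?thesis using el2 \<open>i < p\<close> i(3) by blast
      next
        case False then have "i' = p" using i lenfs by simp
        then show ?thesis using P2[OF \<open>i < p\<close>] i(3) nthp by simp
      qed
    next
      case False then have ip: "i = p" using i lenfs by simp
      show ?thesis
      proof (cases "i' < p")
        case True
        then show ?thesis using P2[OF True] i(3) nthp ip by (simp add: Int_commute)
      next
        case False then have "i' = p" using i lenfs by simp
        then show ?thesis using ip i(3) by simp
      qed
    qed
  qed
  show ?case using G1 G2 fs_def by simp
qed

end

context mg begin

lemma miss_card:
  assumes "proper A \<phi>" "finite A"
  shows "card (miss A \<phi> x) = k - deg A ends x" "deg A ends x \<le> k"
proof -
  define D where "D = {e\<in>A. x \<in> ends e}"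
  have mD: "miss A \<phi> x = {1..k} - \<phi> ` D" unfolding miss_def D_def by auto
  have sub: "\<phi> ` D \<subseteq> {1..k}" using proper_col[OF assms(1)] D_def by auto
  have inj: "inj_on \<phi> D" unfolding inj_on_def D_def using proper_ne[OF assms(1)] by blast
  have fD: "finite D" using assms(2) D_def by simp
  have cD: "card (\<phi> ` D) = deg A ends x" using card_image[OF inj] D_def by (simp add: deg_def)
  show "deg A ends x \<le> k" using card_mono[OF _ sub] cD by simp
  show "card (miss A \<phi> x) = k - deg A ends x"
    using mD card_Diff_subset[OF finite_imageI[OF fD] sub] cD by simp
qed

lemma oth_uniq: "ends e = {v,w} \<Longrightarrow> ends e = {v,w'} \<Longrightarrow> w \<noteq> v \<Longrightarrow> w' \<noteq> v \<Longrightarrow> w = w'"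
  by (metis doubleton_eq_iff)

lemma main:
  assumes mx: "maximal_k_colorable E ends k M" and vV: "v \<in> V" and dv: "deg M ends v < k"
  shows "int (dF V E ends M k v) \<le> int (deg M ends v) -
           (\<Sum>w\<in>Uk V E ends M k v. int k - int (deg M ends w) - int (mult E ends v w))"
proof -
  have ME: "M \<subseteq> E" using mx unfolding maximal_k_colorable_def by simp
  obtain \<phi> where pr: "proper M \<phi>" using mx unfolding maximal_k_colorable_def k_edge_colorable_def by blast
  have nx: "\<not> ext M"
  proof
    assume "ext M"
    then obtain e where e: "e \<in> E - M" "k_edge_colorable (insert e M) ends k" unfolding ext_def by blast
    then have "M \<subset> insert e M" "insert e M \<subseteq> E" using ME by auto
    then show False using mx e(2) unfolding maximal_k_colorable_def by blast
  qed
  have fM: "finite M" by (rule finite_subset[OF ME finE])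
  note mc = miss_card[OF pr fM]
  have "card (miss M \<phi> v) > 0" using mc(1)[of v] dv by simp
  then obtain \<beta> where bv: "\<beta> \<in> miss M \<phi> v" by (metis card.empty ex_in_conv less_irrefl)
  define F where "F = Fk V E ends M k v"
  define U where "U = Uk V E ends M k v"
  have UF: "U \<subseteq> F" unfolding U_def F_def Uk_def by auto
  have FV: "F \<subseteq> V" unfolding F_def Fk_def nbrs_def by auto
  have fF: "finite F" by (rule finite_subset[OF FV finV])
  have Fv: "\<And>w. w \<in> F \<Longrightarrow> w \<noteq> v" unfolding F_def Fk_def nbrs_def by auto
  have Fdeg: "\<And>w. w \<in> F \<Longrightarrow> int (deg M ends w) \<le> int k - int (mult E ends v w)" unfolding F_def Fk_def by auto
  have Udef: "\<And>w. w \<in> U \<longleftrightarrow> w \<in> F \<and> mult M ends v w < mult E ends v w" unfolding U_def F_def Uk_def by auto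
  have fEv: "\<And>w. finite {e\<in>E. ends e = {v,w}}" using finE by simp
  have multle: "\<And>w. mult M ends v w \<le> mult E ends v w"
    unfolding mult_def by (rule card_mono[OF fEv]) (use ME in auto)
  define P0 where "P0 = {(e,w). e \<in> E - M \<and> ends e = {v,w} \<and> w \<in> U}"
  have P0sub: "P0 \<subseteq> E \<times> V" unfolding P0_def using UF FV by auto
  have fP0: "finite P0" by (rule finite_subset[OF P0sub]) (simp add: finE finV)
  obtain xs where xs: "set xs = P0" "distinct xs" using finite_distinct_list[OF fP0] by blast
  have injfst: "inj_on fst P0"
    unfolding inj_on_def P0_def using Fv UF by (auto simp: doubleton_eq_iff)
  have fan0: "fan M \<phi> v xs"
    unfolding fan_def
  proof (intro conjI allI impI)
    show "distinct (map fst xs)" using xs injfst by (simp add: distinct_map)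
    fix i assume i: "i < length xs"
    then have "xs!i \<in> P0" using xs(1) nth_mem by blast
    then obtain e w where ew: "xs!i = (e,w)" "e \<in> E" "e \<notin> M" "ends e = {v,w}" "w \<in> U"
      unfolding P0_def by (cases "xs!i") auto
    have "w \<noteq> v" using ew(5) UF Fv by blast
    then show "fst (xs!i) \<in> E" "ends (fst (xs!i)) = {v, snd (xs!i)}" "snd (xs!i) \<noteq> v"
      "fst (xs!i) \<notin> M \<or> (\<exists>l<i. \<phi> (fst (xs!i)) \<in> miss M \<phi> (snd (xs!l)))"
      using ew by simp_all
  qed
  have U0: "U \<subseteq> snd ` set xs"
  proof
    fix w assume w: "w \<in> U"
    have "\<exists>e\<in>E - M. ends e = {v,w}"
    proof (rule ccontr)
      assume "\<not> ?thesis"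
      then have "{e\<in>E. ends e = {v,w}} \<subseteq> {e\<in>M. ends e = {v,w}}" by auto
      then have "mult E ends v w \<le> mult M ends v w" unfolding mult_def
        using card_mono[of "{e\<in>M. ends e = {v,w}}"] fM by simp
      then show False using w Udef by simp
    qed
    then obtain e where "e \<in> E - M" "ends e = {v,w}" by blast
    then have "(e,w) \<in> P0" using w P0_def by simp
    then show "w \<in> snd ` set xs" using xs(1) by (metis image_eqI snd_conv)
  qed
  define Q where "Q = (\<lambda>fs. fan M \<phi> v fs \<and> U \<subseteq> snd ` set fs)"
  have lenb: "length fs < Suc (card E)" if "Q fs" for fs
  proof -
    have d: "distinct (map fst fs)" using that Q_def fan_def by simp
    have "set (map fst fs) \<subseteq> E"
    proof
      fix e assume "e \<in> set (map fst fs)"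
      then obtain i where "i < length fs" "e = fst (fs!i)" by (auto simp: in_set_conv_nth)
      then show "e \<in> E" using fan_nth(1) that Q_def by blast
    qed
    then have "card (set (map fst fs)) \<le> card E" using card_mono[OF finE] by blast
    then show ?thesis using distinct_card[OF d] by simp
  qed
  have "Q xs" using fan0 U0 Q_def by simp
  then have "\<exists>x. Q x \<and> (\<forall>y. Q y \<longrightarrow> length y \<le> length x)"
    by (rule ex_has_greatest_nat[of Q xs length "Suc (card E)"]) (use lenb in blast)
  then obtain fs where Qfs: "Q fs" and fmax: "\<forall>y. Q y \<longrightarrow> length y \<le> length fs" by blast
  have fan: "fan M \<phi> v fs" and Ufs: "U \<subseteq> snd ` set fs" using Qfs Q_def by auto
  define Y where "Y = snd ` set fs"
  note el = elem[OF ME pr bv nx fan]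
  have Yidx: "\<exists>i<length fs. y = snd (fs!i)" if yY: "y \<in> Y" for y
  proof -
    obtain q where q: "q \<in> set fs" "y = snd q" using yY Y_def by auto
    then obtain i where "i < length fs" "fs!i = q" by (metis in_set_conv_nth)
    then show ?thesis using q(2) by blast
  qed
  have EL1: "miss M \<phi> v \<inter> miss M \<phi> y = {}" if yY: "y \<in> Y" for y
  proof -
    obtain i where "i < length fs" "y = snd (fs!i)" using Yidx[OF yY] by blast
    then show ?thesis using el[THEN conjunct1, rule_format, of i] by simp
  qed
  have EL2: "\<And>y y'. y \<in> Y \<Longrightarrow> y' \<in> Y \<Longrightarrow> y \<noteq> y' \<Longrightarrow> miss M \<phi> y \<inter> miss M \<phi> y' = {}"
  proof -
    fix y y' assume "y \<in> Y" "y' \<in> Y" "y \<noteq> y'"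
    obtain i where "i < length fs" "y = snd (fs!i)" using Yidx \<open>y \<in> Y\<close> by blast
    moreover obtain i' where "i' < length fs" "y' = snd (fs!i')" using Yidx \<open>y' \<in> Y\<close> by blast
    ultimately
    show "miss M \<phi> y \<inter> miss M \<phi> y' = {}" using el[THEN conjunct2, rule_format, of i i'] \<open>y \<noteq> y'\<close> by simp
  qed
  have Yedges: "ends e = {v,y} \<and> y \<noteq> v \<and> e \<in> E" if ey: "(e,y) \<in> set fs" for e y
  proof -
    obtain i where i: "i < length fs" "fs!i = (e,y)" using ey unfolding in_set_conv_nth by blast
    have "fst (fs!i) = e" "snd (fs!i) = y" using i(2) by auto
    then show ?thesis using fan_nth(1-3)[OF fan i(1)] by simp
  qed
  have YV: "Y \<subseteq> V"
  proof
    fix y assume "y \<in> Y"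
    then obtain e where "(e,y) \<in> set fs" unfolding Y_def by auto
    then have "ends e = {v,y}" "e \<in> E" using Yedges by auto
    then show "y \<in> V" using endsE by blast
  qed
  have fY: "finite Y" by (rule finite_subset[OF YV finV])
  have CL: "e \<in> fst ` set fs" if e: "e \<in> M" "v \<in> ends e" "y \<in> Y" "\<phi> e \<in> miss M \<phi> y" for e y
  proof (rule ccontr)
    assume nin: "e \<notin> fst ` set fs"
    have eE: "e \<in> E" using e ME by auto
    obtain w where w: "w \<noteq> v" "ends e = {v,w}" using ends_v[OF eE e(2)] by blast
    obtain l where l: "l < length fs" "y = snd (fs!l)" using Yidx e(3) by blast
    have "\<exists>l<length fs. \<phi> e \<in> miss M \<phi> (snd (fs!l))" using l e(4) by blast
    then have "fan M \<phi> v (fs @ [(e,w)])" using fan_snoc[OF fan nin eE w(2) w(1)] by blast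
    moreover have "U \<subseteq> snd ` set (fs @ [(e,w)])" using Ufs by auto
    ultimately have "Q (fs @ [(e,w)])" using Q_def by simp
    then have "length (fs @ [(e,w)]) \<le> length fs" using fmax by blast
    then show False by simp
  qed
  define D where "D = {e\<in>M. v \<in> ends e}"
  have fD: "finite D" using fM D_def by simp
  have degv: "deg M ends v = card D" unfolding deg_def D_def by simp
  define MU where "MU = (\<Union>y\<in>Y. miss M \<phi> y)"
  define D1 where "D1 = {e\<in>D. \<phi> e \<in> MU}"
  have injD: "inj_on \<phi> D" unfolding inj_on_def D_def using proper_ne[OF pr] by blast
  have imD1: "\<phi> ` D1 = MU"
  proof
    show "\<phi> ` D1 \<subseteq> MU" unfolding D1_def by auto
    show "MU \<subseteq> \<phi> ` D1"
    proof
      fix c assume "c \<in> MU"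
      then obtain y where y: "y \<in> Y" "c \<in> miss M \<phi> y" unfolding MU_def by blast
      have c1: "c \<in> {1..k}" using y(2) unfolding miss_def by simp
      have "c \<notin> miss M \<phi> v" using EL1[OF y(1)] y(2) by blast
      then obtain e where "e \<in> M" "v \<in> ends e" "\<phi> e = c" using c1 unfolding miss_def by blast
      then have "e \<in> D1" using \<open>c \<in> MU\<close> unfolding D1_def D_def by simp
      then show "c \<in> \<phi> ` D1" using \<open>\<phi> e = c\<close> by blast
    qed
  qed
  have fmiss: "\<And>y. finite (miss M \<phi> y)" unfolding miss_def by simp
  have cD1: "card D1 = (\<Sum>y\<in>Y. card (miss M \<phi> y))"
  proof -
    have "D1 \<subseteq> D" unfolding D1_def by blast
    then have "card D1 = card (\<phi> ` D1)" using card_image[OF inj_on_subset[OF injD]] by simp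
    then have "card D1 = card MU" using imD1 by simp
    also have "\<dots> = (\<Sum>y\<in>Y. card (miss M \<phi> y))" unfolding MU_def
      by (rule card_UN_disjoint[OF fY]) (simp add: fmiss, use EL2 in blast)
    finally show ?thesis .
  qed
  define W where "W = (F - U) - Y"
  define D2 where "D2 = (\<Union>w\<in>W. {e\<in>M. ends e = {v,w}})"
  have fW: "finite W" using fF W_def by simp
  have WF: "W \<subseteq> F" using W_def by auto
  have cD2: "card D2 = (\<Sum>w\<in>W. mult M ends v w)"
    unfolding D2_def mult_def
  proof (rule card_UN_disjoint[OF fW])
    show "\<forall>i\<in>W. finite {e \<in> M. ends e = {v, i}}" using fM by simp
    show "\<forall>i\<in>W. \<forall>j\<in>W. i \<noteq> j \<longrightarrow> {e \<in> M. ends e = {v, i}} \<inter> {e \<in> M. ends e = {v, j}} = {}"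
      using oth_uniq Fv WF by blast
  qed
  have D2D: "D2 \<subseteq> D" unfolding D2_def D_def by auto
  have D1D: "D1 \<subseteq> D" unfolding D1_def by auto
  have dis12: "D1 \<inter> D2 = {}"
  proof (rule ccontr)
    assume "D1 \<inter> D2 \<noteq> {}"
    then obtain e where e1: "e \<in> D1" and e2: "e \<in> D2" by blast
    then obtain w where w: "w \<in> W" "e \<in> M" "ends e = {v,w}" unfolding D2_def by blast
    obtain y where y: "y \<in> Y" "\<phi> e \<in> miss M \<phi> y" using e1 unfolding D1_def MU_def by blast
    have "e \<in> fst ` set fs" using CL[OF w(2) _ y] w(3) by simp
    then obtain y' where y': "(e,y') \<in> set fs" by force
    then have "ends e = {v,y'}" "y' \<noteq> v" using Yedges by auto
    then have "y' = w" using oth_uniq w(3) Fv WF w(1) by blast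
    then have "w \<in> Y" using y' Y_def by force
    then show False using w(1) W_def by simp
  qed
  have sum12: "card D1 + card D2 \<le> card D"
  proof -
    have "card (D1 \<union> D2) = card D1 + card D2"
      by (rule card_Un_disjoint) (use finite_subset[OF D1D fD] finite_subset[OF D2D fD] dis12 in auto)
    moreover have "card (D1 \<union> D2) \<le> card D" using card_mono[OF fD] D1D D2D by simp
    ultimately show ?thesis by simp
  qed
  have multeq: "\<And>w. w \<in> F - U \<Longrightarrow> mult M ends v w = mult E ends v w" using Udef multle
    by (meson DiffE le_neq_implies_less)
  have cm: "mult E ends v w \<le> card (miss M \<phi> w)" if "w \<in> F" for w
  proof -
    have "int (deg M ends w) \<le> int k - int (mult E ends v w)" using Fdeg that .
    then show ?thesis using mc(1)[of w] mc(2)[of w] by simp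
  qed
  have fFU: "finite (F - U)" using fF by simp
  have sY: "(\<Sum>y\<in>U. card (miss M \<phi> y)) + (\<Sum>w\<in>(F-U)\<inter>Y. mult E ends v w) \<le> (\<Sum>y\<in>Y. card (miss M \<phi> y))"
  proof -
    have "(\<Sum>w\<in>(F-U)\<inter>Y. mult E ends v w) \<le> (\<Sum>w\<in>(F-U)\<inter>Y. card (miss M \<phi> w))"
      by (rule sum_mono) (use cm in auto)
    moreover have "(\<Sum>y\<in>U. card (miss M \<phi> y)) + (\<Sum>w\<in>(F-U)\<inter>Y. card (miss M \<phi> w))
        = (\<Sum>y\<in>U \<union> ((F-U)\<inter>Y). card (miss M \<phi> y))"
      by (rule sum.union_disjoint[symmetric]) (use fF finite_subset[OF UF fF] in auto)
    moreover have "(\<Sum>y\<in>U \<union> ((F-U)\<inter>Y). card (miss M \<phi> y)) \<le> (\<Sum>y\<in>Y. card (miss M \<phi> y))"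
      by (rule sum_mono2[OF fY]) (use Ufs Y_def in auto)
    ultimately show ?thesis by linarith
  qed
  have sF: "(\<Sum>w\<in>F. mult E ends v w) = (\<Sum>w\<in>U. mult E ends v w) + (\<Sum>w\<in>(F-U)\<inter>Y. mult E ends v w)
      + (\<Sum>w\<in>W. mult E ends v w)"
    using sum.subset_diff[OF UF fF, of "\<lambda>w. mult E ends v w"] sum.Int_Diff[OF fFU, of "\<lambda>w. mult E ends v w" Y]
    unfolding W_def by simp
  have sW: "(\<Sum>w\<in>W. mult M ends v w) = (\<Sum>w\<in>W. mult E ends v w)"
    by (rule sum.cong) (use multeq W_def in auto)
  have key: "(\<Sum>y\<in>U. card (miss M \<phi> y)) + (\<Sum>w\<in>(F-U)\<inter>Y. mult E ends v w) + (\<Sum>w\<in>W. mult E ends v w)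
      \<le> deg M ends v"
    using sY cD1 cD2 sW sum12 degv by linarith
  have sU: "(\<Sum>w\<in>U. int k - int (deg M ends w) - int (mult E ends v w))
      = int (\<Sum>y\<in>U. card (miss M \<phi> y)) - int (\<Sum>w\<in>U. mult E ends v w)"
  proof -
    have "(\<Sum>w\<in>U. int k - int (deg M ends w) - int (mult E ends v w))
        = (\<Sum>w\<in>U. int (card (miss M \<phi> w)) - int (mult E ends v w))"
      by (rule sum.cong) (use mc in \<open>auto simp: of_nat_diff\<close>)
    also have "\<dots> = (\<Sum>w\<in>U. int (card (miss M \<phi> w))) - (\<Sum>w\<in>U. int (mult E ends v w))"
      by (rule sum_subtractf)
    finally show ?thesis by simp
  qed
  have dFe: "dF V E ends M k v = (\<Sum>w\<in>F. mult E ends v w)" unfolding dF_def F_def by simp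
  show ?thesis unfolding U_def[symmetric] sU dFe sF using key by linarith
qed

end

theorem mainTheorem3:
  fixes V :: "'v set" and E :: "'e set" and ends :: "'e \<Rightarrow> 'v set"
    and M :: "'e set" and k :: nat and v :: 'v
  assumes "loopless_multigraph V E ends"
    and "k \<ge> 1"
    and "maximal_k_colorable E ends k M"
    and "v \<in> V"
    and "deg M ends v < k"
  shows "int (dF V E ends M k v) \<le> int (deg M ends v) -
           (\<Sum>w\<in>Uk V E ends M k v. int k - int (deg M ends w) - int (mult E ends v w))"
proof -
  interpret mg V E ends k by unfold_locales (rule assms(1))
  show ?thesis by (rule main[OF assms(3,4,5)])
qed

end
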